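(* Let $(X,T)$ be a minimal system and $d\ge2$. Then there is a dense $G_\delta$ subset $X_0\subset X$ such that for every $x\in X_0$, $\{(x_1,\dots,x_d)\in N_d(X):x_1=x\}=\{x\}\times L_x$, where $L_x=\overline{\{(T^nx,T^{2n}x,\dots,T^{(d-1)n}x):n\in\mathbb{Z}\}}$ is the orbit closure of $(x,\dots,x)\in X^{d-1}$ under $T\times T^2\times\cdots\times T^{d-1}$.
   Context: $N_d(X)=\overline{\{(T^{p+q}x,\dots,T^{p+dq}x):x\in X,p,q\in\mathbb{Z}\}}\subset X^d$. *)

theory Defs
  imports "HOL-Analysis.Analysis"
begin

definition tds :: "'a::metric_space set \<Rightarrow> ('a \<Rightarrow> 'a) \<Rightarrow> bool" where
  "tds X T \<longleftrightarrow> X \<noteq> {} \<and> compact X \<and> continuous_on X T \<and> inj_on T X \<and> T ` X = X"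

definition minimal_system :: "'a::metric_space set \<Rightarrow> ('a \<Rightarrow> 'a) \<Rightarrow> bool" where
  "minimal_system X T \<longleftrightarrow> tds X T \<and>
     (\<forall>A. A \<subseteq> X \<and> A \<noteq> {} \<and> closed A \<and> T ` A \<subseteq> A \<longrightarrow> A = X)"

definition tpow :: "'a set \<Rightarrow> ('a \<Rightarrow> 'a) \<Rightarrow> int \<Rightarrow> 'a \<Rightarrow> 'a" where
  "tpow X T n x = (if n \<ge> 0 then (T ^^ nat n) x else (inv_into X T ^^ nat (- n)) x)"

text \<open>Points of X^k are represented as functions on indices {1..k} (restricted, i.e. undefined
  outside), carrying the product topology.\<close>

definition Nd :: "'a::metric_space set \<Rightarrow> ('a \<Rightarrow> 'a) \<Rightarrow> nat \<Rightarrow> (nat \<Rightarrow> 'a) set" where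
  "Nd X T d = closure {restrict (\<lambda>i. tpow X T (p + int i * q) x) {1..d} | x p q. x \<in> X}"

definition Lx :: "'a::metric_space set \<Rightarrow> ('a \<Rightarrow> 'a) \<Rightarrow> nat \<Rightarrow> 'a \<Rightarrow> (nat \<Rightarrow> 'a) set" where
  "Lx X T d x = closure {restrict (\<lambda>j. tpow X T (int j * n) x) {1..d-1} | n. True}"

definition tcons :: "nat \<Rightarrow> 'a \<Rightarrow> (nat \<Rightarrow> 'a) \<Rightarrow> (nat \<Rightarrow> 'a)" where
  "tcons d x y = restrict (\<lambda>i. if i = 1 then x else y (i - 1)) {1..d}"

end

theory Submission
  imports Defs "HOL-Analysis.Analysis"
begin
lemma closure_approx_dest:
  fixes z :: "'i \<Rightarrow> 'a::metric_space"
  assumes "z \<in> closure S" "finite I" "e > 0"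
  shows "\<exists>s\<in>S. \<forall>i\<in>I. dist (s i) (z i) < e"
proof -
  have "open {f. \<forall>i\<in>I. f (id i) \<in> ball (z i) e}"
    by (rule product_topology_basis') (use assms in auto)
  moreover have "z \<in> {f. \<forall>i\<in>I. f (id i) \<in> ball (z i) e}" using assms by auto
  ultimately have "S \<inter> {f. \<forall>i\<in>I. f (id i) \<in> ball (z i) e} \<noteq> {}"
    using assms(1) unfolding closure_iff_nhds_not_empty by blast
  then show ?thesis by (auto simp: dist_commute)
qed

lemma closure_coord_closed:
  fixes z :: "'i \<Rightarrow> 'a::metric_space"
  assumes "z \<in> closure S" "closed C" "\<And>s. s \<in> S \<Longrightarrow> s i \<in> C"
  shows "z i \<in> C"
proof -
  have "closed ((\<lambda>f. f i) -` C)"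
    using continuous_on_closed_vimage[of UNIV "\<lambda>f. f i"] continuous_on_product_coordinates assms(2)
    by auto
  then have "closure S \<subseteq> (\<lambda>f. f i) -` C"
    using assms by (intro closure_minimal) auto
  then show ?thesis using assms by auto
qed

lemma closure_restrict_approx:
  fixes z :: "'i \<Rightarrow> 'a::metric_space"
  assumes "finite I" "\<And>i. i \<notin> I \<Longrightarrow> z i = undefined"
    "\<And>s i. s \<in> S \<Longrightarrow> i \<notin> I \<Longrightarrow> s i = undefined"
    "\<And>e. e > 0 \<Longrightarrow> \<exists>s\<in>S. \<forall>i\<in>I. dist (s i) (z i) < e"
  shows "z \<in> closure S"
  unfolding closure_iff_nhds_not_empty
proof (intro allI impI)
  fix A U assume "U \<subseteq> A" "open U" "z \<in> U"
  then have "openin (product_topology (\<lambda>i. euclidean) UNIV) U" by (simp add: open_fun_def)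
  from product_topology_open_contains_basis[OF this \<open>z \<in> U\<close>] obtain X where
    X: "z \<in> (\<Pi>\<^sub>E i\<in>UNIV. X i)" "\<And>i. open (X i)" "(\<Pi>\<^sub>E i\<in>UNIV. X i) \<subseteq> U" by auto
  have "\<forall>i\<in>I. \<exists>r>0. ball (z i) r \<subseteq> X i"
    using X by (meson PiE_mem UNIV_I openE)
  then obtain r where r: "\<And>i. i \<in> I \<Longrightarrow> r i > 0 \<and> ball (z i) (r i) \<subseteq> X i" by metis
  define e where "e = Min (insert 1 (r ` I))"
  have e: "e > 0" using r assms(1) by (auto simp: e_def)
  have eI: "e \<le> r i" if "i \<in> I" for i using assms(1) that by (auto simp: e_def)
  obtain s where s: "s \<in> S" "\<forall>i\<in>I. dist (s i) (z i) < e" using assms(4)[OF e] by auto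
  have "s \<in> (\<Pi>\<^sub>E i\<in>UNIV. X i)"
  proof (auto simp: PiE_iff)
    fix i show "s i \<in> X i"
    proof (cases "i \<in> I")
      case True
      then have "s i \<in> ball (z i) (r i)" using s eI[OF True] by (auto simp: dist_commute)
      then show ?thesis using r True by blast
    next
      case False
      then show ?thesis using assms(2)[OF False] assms(3)[OF s(1) False] X(1) by (metis PiE_iff UNIV_I)
    qed
  qed
  then show "S \<inter> A \<noteq> {}" using s X \<open>U \<subseteq> A\<close> by blast
qed


lemma funpow_in:
  assumes "\<And>x. x \<in> X \<Longrightarrow> f x \<in> X" "x \<in> X"
  shows "(f ^^ k) x \<in> X"
  by (induction k) (use assms in auto)

lemma funpow_cont:
  assumes "continuous_on X f" "f ` X \<subseteq> X"
  shows "continuous_on X (f ^^ k)"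
proof (induction k)
  case 0 then show ?case by (simp add: continuous_on_id)
next
  case (Suc k)
  have "(f ^^ Suc k) = f \<circ> (f ^^ k)" by simp
  moreover have "(f ^^ k) ` X \<subseteq> X" using funpow_in[of X f] assms(2) by blast
  ultimately show ?case using Suc assms continuous_on_compose continuous_on_subset by metis
qed

lemma tds_facts:
  assumes "tds X T"
  shows "\<And>x. x \<in> X \<Longrightarrow> T x \<in> X" "\<And>x. x \<in> X \<Longrightarrow> inv_into X T x \<in> X"
    "\<And>x. x \<in> X \<Longrightarrow> T (inv_into X T x) = x" "\<And>x. x \<in> X \<Longrightarrow> inv_into X T (T x) = x"
    "continuous_on X (inv_into X T)" "closed X"
proof -
  have X: "X \<noteq> {}" "compact X" "continuous_on X T" "inj_on T X" "T ` X = X"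
    using assms by (auto simp: tds_def)
  show "\<And>x. x \<in> X \<Longrightarrow> T x \<in> X" using X by blast
  show "\<And>x. x \<in> X \<Longrightarrow> inv_into X T x \<in> X" using X by (metis inv_into_into)
  show "\<And>x. x \<in> X \<Longrightarrow> T (inv_into X T x) = x" using X by (metis f_inv_into_f)
  show "\<And>x. x \<in> X \<Longrightarrow> inv_into X T (T x) = x" using X by (metis inv_into_f_f)
  show "continuous_on X (inv_into X T)"
    using continuous_on_inv[OF X(3) X(2), of "inv_into X T"] X by (metis inv_into_f_f)
  show "closed X" using X compact_imp_closed by blast
qed

lemma tpow_in:
  assumes "tds X T" "x \<in> X"
  shows "tpow X T n x \<in> X"
  using funpow_in[of X T] funpow_in[of X "inv_into X T"] tds_facts[OF assms(1)] assms(2)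
  by (simp add: tpow_def)

lemma tpow_0 [simp]: "tpow X T 0 x = x"
  by (simp add: tpow_def)

lemma tpow_cont:
  assumes "tds X T"
  shows "continuous_on X (tpow X T n)"
proof -
  have c1: "continuous_on X (T ^^ k)" for k
    using funpow_cont[of X T] assms by (auto simp: tds_def)
  have c2: "continuous_on X (inv_into X T ^^ k)" for k
    using funpow_cont[of X "inv_into X T"] tds_facts[OF assms] by blast
  show ?thesis
    by (cases "n \<ge> 0") (use c1 c2 in \<open>simp_all add: tpow_def[abs_def]\<close>)
qed

lemma tpow_suc:
  assumes "tds X T" "x \<in> X"
  shows "tpow X T (n + 1) x = T (tpow X T n x)"
proof (cases "n \<ge> 0")
  case True
  then have "nat (n + 1) = Suc (nat n)" by simp
  then show ?thesis using True by (simp add: tpow_def)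
next
  case False
  then have e: "nat (- n) = Suc (nat (- (n + 1)))" by simp
  have "(inv_into X T ^^ nat (- (n + 1))) x \<in> X"
    using funpow_in[of X "inv_into X T"] tds_facts[OF assms(1)] assms(2) by blast
  then show ?thesis using False e tds_facts[OF assms(1)] by (simp add: tpow_def)
qed

lemma tpow_pred:
  assumes "tds X T" "x \<in> X"
  shows "tpow X T (n - 1) x = inv_into X T (tpow X T n x)"
proof -
  have "tpow X T n x = T (tpow X T (n - 1) x)"
    using tpow_suc[OF assms, of "n - 1"] by simp
  then show ?thesis using tds_facts(4)[OF assms(1) tpow_in[OF assms]] by simp
qed

lemma tpow_add:
  assumes "tds X T" "x \<in> X"
  shows "tpow X T (a + b) x = tpow X T a (tpow X T b x)"
proof (induction a rule: int_induct[where k = 0])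
  case base then show ?case by simp
next
  case (step1 i)
  have "tpow X T (i + 1 + b) x = tpow X T ((i + b) + 1) x" by (simp add: ac_simps)
  also have "\<dots> = T (tpow X T (i + b) x)" using tpow_suc[OF assms] by blast
  also have "\<dots> = tpow X T (i + 1) (tpow X T b x)"
    using step1 tpow_suc[OF assms(1) tpow_in[OF assms]] by simp
  finally show ?case .
next
  case (step2 i)
  have "tpow X T (i - 1 + b) x = tpow X T ((i + b) - 1) x" by (simp add: algebra_simps)
  also have "\<dots> = inv_into X T (tpow X T (i + b) x)" using tpow_pred[OF assms] by blast
  also have "\<dots> = tpow X T (i - 1) (tpow X T b x)"
    using step2 tpow_pred[OF assms(1) tpow_in[OF assms]] by simp
  finally show ?case .
qed

theorem lemma4p4:
  fixes X :: "'a::metric_space set" and T :: "'a \<Rightarrow> 'a" and d :: nat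
  assumes "minimal_system X T" and "d \<ge> 2"
  shows "\<exists>X0. X0 \<subseteq> X \<and> gdelta_in (top_of_set X) X0 \<and> X \<subseteq> closure X0 \<and>
           (\<forall>x\<in>X0. {z \<in> Nd X T d. z 1 = x} = tcons d x ` Lx X T d x)"
proof -
  have tds: "tds X T" using assms(1) by (simp add: minimal_system_def)
  note F = tds_facts[OF tds]
  have cX: "compact X" using tds by (simp add: tds_def)
  define D where "D = d - 1"
  have D1: "D \<ge> 1" using assms(2) by (simp add: D_def)
  define r :: "nat \<Rightarrow> real" where "r m = 1 / (real m + 1)" for m
  have rpos: "r m > 0" for m by (simp add: r_def)
  have "\<forall>m. \<exists>K. finite K \<and> K \<subseteq> X \<and> X \<subseteq> (\<Union>c\<in>K. ball c (r m))"
    using seq_compact_imp_totally_bounded[OF compact_imp_seq_compact[OF cX]] rpos by blast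
  then obtain K where K: "\<And>m. finite (K m)" "\<And>m. K m \<subseteq> X" "\<And>m. X \<subseteq> (\<Union>c\<in>K m. ball c (r m))"
    by metis
  define J where "J = (SIGMA m:UNIV. PiE {1..D} (\<lambda>_. K m))"
  have cJ: "countable J" unfolding J_def
    by (rule countable_SIGMA) (simp_all add: countable_finite finite_PiE K)
  define E where "E = (\<lambda>(m, c). {x\<in>X. \<exists>n::int. \<forall>j\<in>{1..D}. dist (tpow X T (int j * n) x) (c j) < r m})"
  define G where "G = (\<lambda>mc. E mc \<union> (X - closure (E mc)))"
  define X0 where "X0 = \<Inter> (insert X (G ` J))"
  have Eopen: "openin (top_of_set X) (E mc)" for mc
  proof -
    obtain m c where mc: "mc = (m,c)" by fastforce
    define P where "P n = X \<inter> (\<lambda>x j. tpow X T (int j * n) x) -` {f. \<forall>j\<in>{1..D}. f (id j) \<in> ball (c j) (r m)}" for n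
    have "E mc = \<Union> (range P)"
      by (auto simp: mc E_def P_def dist_commute)
    moreover have "openin (top_of_set X) (P n)" for n
      unfolding P_def
    proof (rule continuous_openin_preimage_gen)
      show "continuous_on X (\<lambda>x j. tpow X T (int j * n) x)"
        by (intro continuous_on_coordinatewise_then_product tpow_cont[OF tds])
      show "open {f. \<forall>j\<in>{1..D}. f (id j) \<in> ball (c j) (r m)}"
        by (rule product_topology_basis') auto
    qed
    ultimately show ?thesis by auto
  qed
  have EX: "E mc \<subseteq> X" for mc by (auto simp: E_def split: prod.splits)
  have Gopen: "openin (top_of_set X) (G mc)" for mc
  proof -
    have "X - closure (E mc) = X \<inter> (- closure (E mc))" by auto
    then show ?thesis unfolding G_def using Eopen by (metis openin_Un openin_open_Int open_Compl closed_closure)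
  qed
  have Gdense: "X \<subseteq> closure (G mc)" for mc
  proof
    fix x assume "x \<in> X"
    show "x \<in> closure (G mc)"
    proof (cases "x \<in> closure (E mc)")
      case True
      then show ?thesis using closure_mono[of "E mc" "G mc"] by (auto simp: G_def)
    next
      case False
      then have "x \<in> G mc" using \<open>x \<in> X\<close> by (auto simp: G_def)
      then show ?thesis using closure_subset by blast
    qed
  qed
  have GX: "G mc \<subseteq> X" for mc using EX by (auto simp: G_def)
  have fam: "openin (top_of_set X) S \<and> (top_of_set X) closure_of S = topspace (top_of_set X)"
    if hS: "S \<in> insert X (G ` J)" for S
  proof -
    have "openin (top_of_set X) S \<and> S \<subseteq> X \<and> X \<subseteq> closure S"
    proof (cases "S = X")
      case True then show ?thesis using closure_subset by auto
    next
      case False then obtain mc where "S = G mc" using hS by blast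
      then show ?thesis using Gopen GX Gdense by blast
    qed
    moreover from this have "X \<inter> S = S" by blast
    ultimately show ?thesis by (auto simp: closure_of_subtopology)
  qed
  have "(top_of_set X) closure_of X0 = topspace (top_of_set X)"
    unfolding X0_def
  proof (rule Baire_category)
    have "compact_space (top_of_set X)" using cX by (simp add: compact_space_subtopology)
    then show "completely_metrizable_space (top_of_set X) \<or>
      locally_compact_space (top_of_set X) \<and> regular_space (top_of_set X)"
      by (simp add: compact_imp_locally_compact_space regular_space_subtopology regular_space_euclidean)
    show "countable (insert X (G ` J))" using cJ by simp
  qed (use fam in blast)
  moreover have X0X: "X0 \<subseteq> X" by (auto simp: X0_def)
  ultimately have X0dense: "X \<subseteq> closure X0"
    by (auto simp: closure_of_subtopology Int_absorb1)
  have X0gd: "gdelta_in (top_of_set X) X0"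
    unfolding X0_def
    by (rule gdelta_in_Inter) (use cJ fam in \<open>auto intro: open_imp_gdelta_in\<close>)
  have main: "{z \<in> Nd X T d. z 1 = x} = tcons d x ` Lx X T d x" if x0: "x \<in> X0" for x
  proof -
    have xX: "x \<in> X" using x0 X0X by blast
    have xG: "x \<in> G mc" if "mc \<in> J" for mc using x0 that by (auto simp: X0_def)
    define S where "S = {restrict (\<lambda>i. tpow X T (p + int i * q) x) {1..d} | x p q. x \<in> X}"
    have NdS: "Nd X T d = closure S" by (simp add: Nd_def S_def)
    define LS where "LS = {restrict (\<lambda>j. tpow X T (int j * n) x) {1..d-1} | n. True}"
    have LxS: "Lx X T d x = closure LS" by (simp add: Lx_def LS_def)
    have NdX: "z i \<in> X" if "z \<in> Nd X T d" "i \<in> {1..d}" for z i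
    proof (rule closure_coord_closed[of z S X i])
      show "z \<in> closure S" using that NdS by simp
      show "closed X" by (rule F(6))
      fix s assume "s \<in> S"
      then show "s i \<in> X" using that(2) tpow_in[OF tds] by (auto simp: S_def)
    qed
    have NdU: "z i = undefined" if "z \<in> Nd X T d" "i \<notin> {1..d}" for z i
    proof -
      have "z i \<in> {undefined}"
      proof (rule closure_coord_closed[of z S])
        show "z \<in> closure S" using that NdS by simp
        fix s assume "s \<in> S"
        then show "s i \<in> {undefined}" using that(2) by (auto simp: S_def)
      qed auto
      then show ?thesis by simp
    qed
    show ?thesis
    proof (intro equalityI subsetI)
      fix z assume "z \<in> {z \<in> Nd X T d. z 1 = x}"
      then have zN: "z \<in> Nd X T d" and z1: "z 1 = x" by auto
      define y where "y = restrict (\<lambda>j. z (j+1)) {1..D}"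
      have "z = tcons d x y"
      proof
        fix i show "z i = tcons d x y i"
          using NdU[OF zN, of i] z1 by (cases "i \<in> {1..d}") (auto simp: tcons_def y_def D_def)
      qed
      moreover have "y \<in> Lx X T d x"
        unfolding LxS
      proof (rule closure_restrict_approx[where I="{1..D}"])
        show "finite {1..D}" by simp
        show "y i = undefined" if "i \<notin> {1..D}" for i using that by (auto simp: y_def)
        show "s i = undefined" if "s \<in> LS" "i \<notin> {1..D}" for s i using that by (auto simp: LS_def D_def)
        fix e :: real assume e: "e > 0"
        obtain n :: nat where n0: "n > 0" "inverse (real n) < e / 2"
          using ex_inverse_of_nat_less[of "e/2"] e by auto
        define m where "m = n - 1"
        have m: "r m < e / 2" using n0 by (simp add: m_def r_def inverse_eq_divide of_nat_diff)
        have yX: "y j \<in> X" if "j \<in> {1..D}" for j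
          using NdX[OF zN, of "j+1"] that by (auto simp: y_def D_def)
        have "\<forall>j\<in>{1..D}. \<exists>c\<in>K m. dist (y j) c < r m"
        proof
          fix j assume "j \<in> {1..D}"
          then have "y j \<in> (\<Union>c\<in>K m. ball c (r m))" using yX K(3) by blast
          then show "\<exists>c\<in>K m. dist (y j) c < r m" by (auto simp: dist_commute)
        qed
        then obtain cf where cf: "\<And>j. j\<in>{1..D} \<Longrightarrow> cf j \<in> K m \<and> dist (y j) (cf j) < r m"
          by metis
        define c where "c = restrict cf {1..D}"
        have cJ': "(m, c) \<in> J" using cf by (auto simp: J_def c_def)
        have cc: "dist (y j) (c j) < r m" if "j \<in> {1..D}" for j using cf that by (simp add: c_def)
        define sl where "sl = Min ((\<lambda>j. r m - dist (y j) (c j)) ` {1..D})"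
        have slpos: "sl > 0" using D1 cc by (auto simp: sl_def)
        have slle: "sl \<le> r m - dist (y j) (c j)" if "j\<in>{1..D}" for j
          using that by (simp add: sl_def)
        have "x \<in> closure (E (m,c))"
          unfolding closure_approachable
        proof (intro allI impI)
          fix \<delta> :: real assume \<delta>: "\<delta> > 0"
          obtain s where s: "s \<in> S" "\<forall>i\<in>{1..d}. dist (s i) (z i) < min \<delta> sl"
            using closure_approx_dest[of z S "{1..d}" "min \<delta> sl"] zN \<delta> slpos by (auto simp: NdS)
          then obtain x0 p q where x0: "x0 \<in> X"
            and sx: "s = restrict (\<lambda>i. tpow X T (p + int i * q) x0) {1..d}" by (auto simp: S_def)
          define x' where "x' = tpow X T (p + q) x0"
          have x'X: "x' \<in> X" using tpow_in[OF tds x0] by (simp add: x'_def)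
          have "(1::nat) \<in> {1..d}" using assms(2) by simp
          then have "dist (s 1) (z 1) < min \<delta> sl" using s(2) by blast
          then have "dist x' x < \<delta>" using z1 assms(2) by (simp add: sx x'_def)
          moreover have "x' \<in> E (m, c)"
          proof -
            have "dist (tpow X T (int j * q) x') (c j) < r m" if j: "j \<in> {1..D}" for j
            proof -
              have "tpow X T (int j * q) x' = tpow X T (p + int (j+1) * q) x0"
                using tpow_add[OF tds x0, of "int j * q" "p + q"] by (simp add: x'_def algebra_simps)
              also have "\<dots> = s (j+1)" using j by (auto simp: sx D_def)
              finally have eq: "tpow X T (int j * q) x' = s (j + 1)" .
              have "j + 1 \<in> {1..d}" using j by (auto simp: D_def)
              then have "dist (s (j+1)) (y j) < sl" using s(2) j by (auto simp: y_def)
              then show ?thesis unfolding eq using slle[OF j] dist_triangle[of "s (j+1)" "c j" "y j"] by linarith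
            qed
            then show ?thesis using x'X unfolding E_def by blast
          qed
          ultimately show "\<exists>x'\<in>E (m, c). dist x' x < \<delta>" by blast
        qed
        then have "x \<in> E (m, c)" using xG[OF cJ'] by (auto simp: G_def)
        then obtain k where k: "\<forall>j\<in>{1..D}. dist (tpow X T (int j * k) x) (c j) < r m"
          by (auto simp: E_def)
        show "\<exists>s\<in>LS. \<forall>i\<in>{1..D}. dist (s i) (y i) < e"
        proof (intro bexI ballI)
          show "restrict (\<lambda>j. tpow X T (int j * k) x) {1..D} \<in> LS" by (auto simp: LS_def D_def)
          fix j assume j: "j \<in> {1..D}"
          have "dist (c j) (y j) < r m" using cc[OF j] by (simp add: dist_commute)
          then show "dist (restrict (\<lambda>j. tpow X T (int j * k) x) {1..D} j) (y j) < e"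
            using k[rule_format, OF j] j m dist_triangle[of "tpow X T (int j * k) x" "y j" "c j"] by simp
        qed
      qed
      ultimately show "z \<in> tcons d x ` Lx X T d x" by blast
    next
      fix w assume "w \<in> tcons d x ` Lx X T d x"
      then obtain y where y: "y \<in> Lx X T d x" and w: "w = tcons d x y" by blast
      have "w 1 = x" using assms(2) by (simp add: w tcons_def)
      moreover have "w \<in> Nd X T d" unfolding NdS
      proof (rule closure_restrict_approx[where I="{1..d}"])
        show "finite {1..d}" by simp
        show "w i = undefined" if "i \<notin> {1..d}" for i using that by (auto simp: w tcons_def)
        show "s i = undefined" if "s \<in> S" "i \<notin> {1..d}" for s i using that by (auto simp: S_def)
        fix e :: real assume e: "e > 0"
        obtain s where s: "s \<in> LS" "\<forall>j\<in>{1..D}. dist (s j) (y j) < e"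
          using closure_approx_dest[of y LS "{1..D}" e] y e by (auto simp: LxS)
        then obtain n where sn: "s = restrict (\<lambda>j. tpow X T (int j * n) x) {1..D}"
          by (auto simp: LS_def D_def)
        define s' where "s' = restrict (\<lambda>i. tpow X T (- n + int i * n) x) {1..d}"
        have "s' \<in> S" unfolding S_def s'_def using xX by blast
        moreover have "dist (s' i) (w i) < e" if "i \<in> {1..d}" for i
        proof (cases "i = 1")
          case True then show ?thesis using e that by (simp add: s'_def w tcons_def)
        next
          case False
          then have j: "i - 1 \<in> {1..D}" using that by (auto simp: D_def)
          have ii: "- n + int i * n = int (i - 1) * n" using False that by (simp add: algebra_simps of_nat_diff)
          have "dist (s (i - 1)) (y (i - 1)) < e" using s(2) j by blast
          then show ?thesis using j that False ii by (simp add: s'_def w tcons_def sn)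
        qed
        ultimately show "\<exists>s\<in>S. \<forall>i\<in>{1..d}. dist (s i) (w i) < e" by blast
      qed
      ultimately show "w \<in> {z \<in> Nd X T d. z 1 = x}" by blast
    qed
  qed
  show ?thesis using X0X X0gd X0dense main by blast
qed

end
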